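(* There exist absolute constants $c_1,c_2>0$ such that for every $M\in\{0,1\}^{m\times n}$, $$c_1\operatorname{disc}^{+}(M)\leq \operatorname{pdisc}_0(M)\leq c_2\operatorname{disc}^{+}(M)\quad\text{and}\quad c_1\operatorname{disc}^{-}(M)\leq \operatorname{pdisc}_0(M)\leq c_2\operatorname{disc}^{-}(M).$$
   Context: For $M\in\{0,1\}^{m\times n}$, $|M|$ is the number of $1$ entries, $p=|M|/(mn)$, and for $X\subset[m]$, $Y\subset[n]$, $\operatorname{disc}(X,Y)=|M[X\times Y]|-p|X||Y|$, where $|M[X\times Y]|$ is the number of $1$ entries of the submatrix with rows $X$ and columns $Y$; $\operatorname{disc}^{+}(M)=\max_{X,Y}\operatorname{disc}(X,Y)$ and $\operatorname{disc}^{-}(M)=\max_{X,Y}(-\operatorname{disc}(X,Y))$. Further, $\operatorname{pdisc}_0(M)=\max\left(\sum_{i,j}M_{i,j}\langle v_i,w_j\rangle-p\sum_{i,j}\langle v_i,w_j\rangle\right)$, the maximum over all $v_1,\dots,v_m,w_1,\dots,w_n\in\mathbb{R}^{m+n}$ with $\|v_i\|_2\leq1$, $\|w_j\|_2\leq 1$. *)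

theory Defs
  imports Complex_Main
begin

text \<open>A matrix M in {0,1}^(m x n) is represented as M :: nat => nat => real,
  with rows indexed by {..<m} and columns by {..<n}; entries outside are irrelevant.\<close>

definition ones :: "nat \<Rightarrow> nat \<Rightarrow> (nat \<Rightarrow> nat \<Rightarrow> real) \<Rightarrow> nat set \<Rightarrow> nat set \<Rightarrow> real" where
  "ones m n M X Y = (\<Sum>i\<in>X. \<Sum>j\<in>Y. M i j)"

definition density :: "nat \<Rightarrow> nat \<Rightarrow> (nat \<Rightarrow> nat \<Rightarrow> real) \<Rightarrow> real" where
  "density m n M = ones m n M {..<m} {..<n} / (real m * real n)"

definition disc :: "nat \<Rightarrow> nat \<Rightarrow> (nat \<Rightarrow> nat \<Rightarrow> real) \<Rightarrow> nat set \<Rightarrow> nat set \<Rightarrow> real" where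
  "disc m n M X Y = ones m n M X Y - density m n M * real (card X) * real (card Y)"

definition disc_plus :: "nat \<Rightarrow> nat \<Rightarrow> (nat \<Rightarrow> nat \<Rightarrow> real) \<Rightarrow> real" where
  "disc_plus m n M = Max {disc m n M X Y | X Y. X \<subseteq> {..<m} \<and> Y \<subseteq> {..<n}}"

definition disc_minus :: "nat \<Rightarrow> nat \<Rightarrow> (nat \<Rightarrow> nat \<Rightarrow> real) \<Rightarrow> real" where
  "disc_minus m n M = Max {- disc m n M X Y | X Y. X \<subseteq> {..<m} \<and> Y \<subseteq> {..<n}}"

text \<open>Vectors in R^(m+n) are functions nat => real, using coordinates {..<m+n}.\<close>

definition ip :: "nat \<Rightarrow> (nat \<Rightarrow> real) \<Rightarrow> (nat \<Rightarrow> real) \<Rightarrow> real" where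
  "ip d x y = (\<Sum>k<d. x k * y k)"

definition pdisc0 :: "nat \<Rightarrow> nat \<Rightarrow> (nat \<Rightarrow> nat \<Rightarrow> real) \<Rightarrow> real" where
  "pdisc0 m n M = Sup {(\<Sum>i<m. \<Sum>j<n. M i j * ip (m+n) (v i) (w j))
                       - density m n M * (\<Sum>i<m. \<Sum>j<n. ip (m+n) (v i) (w j)) | v w.
          (\<forall>i<m. sqrt (ip (m+n) (v i) (v i)) \<le> 1) \<and> (\<forall>j<n. sqrt (ip (m+n) (w j) (w j)) \<le> 1)}"

end

theory Submission
  imports Defs "HOL-Library.FuncSet"
begin


definition E :: "nat \<Rightarrow> (nat \<Rightarrow> real) set" where
  "E d = PiE {..<d} (\<lambda>_. {-1, 1})"

lemma finite_E: "finite (E d)"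
  unfolding E_def by (rule finite_PiE) auto

lemma sumE_Suc:
  "(\<Sum>e\<in>E (Suc d). F e) = (\<Sum>e\<in>E d. F (e(d := 1)) + F (e(d := -1)))"
proof -
  have eq: "E (Suc d) = (\<lambda>(y, g). g(d := y)) ` ({-1,1} \<times> E d)"
    unfolding E_def lessThan_Suc using PiE_insert_eq[of d "{..<d}" "\<lambda>_. {-1::real,1}"] by simp
  have inj: "inj_on (\<lambda>(y, g). g(d := y)) ({-1::real,1} \<times> E d)"
    unfolding E_def using inj_combinator[of d "{..<d}" "\<lambda>_. {-1::real,1}"] by simp
  have "(\<Sum>e\<in>E (Suc d). F e) = (\<Sum>p\<in>{-1::real,1} \<times> E d. F ((snd p)(d := fst p)))"
    unfolding eq by (subst sum.reindex[OF inj]) (simp add: case_prod_beta)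
  also have "\<dots> = (\<Sum>y\<in>{-1::real,1}. \<Sum>e\<in>E d. F (e(d := y)))"
    unfolding sum.cartesian_product by (simp add: case_prod_beta)
  also have "\<dots> = (\<Sum>e\<in>E d. F (e(d := 1)) + F (e(d := -1)))"
    by (simp add: sum.distrib add.commute)
  finally show ?thesis .
qed

lemma sumE_0: "(\<Sum>e\<in>E 0. F e) = F (\<lambda>_. undefined)"
  unfolding E_def by (simp add: PiE_empty_domain)

definition Xf :: "nat \<Rightarrow> (nat \<Rightarrow> real) \<Rightarrow> (nat \<Rightarrow> real) \<Rightarrow> real" where
  "Xf d u e = (\<Sum>k<d. u k * e k)"

lemma Xf_upd: "Xf (Suc d) u (e(d := s)) = Xf d u e + u d * s"
proof -
  have "(\<Sum>k<d. u k * (e(d := s)) k) = (\<Sum>k<d. u k * e k)"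
    by (rule sum.cong) auto
  then show ?thesis unfolding Xf_def by simp
qed

lemma sumE_1: "(\<Sum>e\<in>E d. (1::real)) = 2 ^ d"
proof (induction d)
  case 0 show ?case by (simp only: sumE_0) simp
next
  case (Suc d)
  have "(\<Sum>e\<in>E (Suc d). (1::real)) = (\<Sum>e\<in>E d. 1 + 1)" by (rule sumE_Suc)
  also have "\<dots> = 2 * (\<Sum>e\<in>E d. (1::real))" by (simp only: sum.distrib mult_2)
  finally show ?case using Suc by simp
qed

lemma sumE_XY: "(\<Sum>e\<in>E d. Xf d u e * Xf d v e) = 2 ^ d * ip d u v"
proof (induction d)
  case 0 then show ?case by (simp add: sumE_0 Xf_def ip_def)
next
  case (Suc d)
  have "(\<Sum>e\<in>E (Suc d). Xf (Suc d) u e * Xf (Suc d) v e)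
     = (\<Sum>e\<in>E d. 2 * (Xf d u e * Xf d v e) + 2 * (u d * v d))"
    unfolding sumE_Suc Xf_upd by (rule sum.cong) (simp_all add: algebra_simps)
  also have "\<dots> = 2 * (\<Sum>e\<in>E d. Xf d u e * Xf d v e) + 2 * (u d * v d) * (\<Sum>e\<in>E d. (1::real))"
    by (simp add: sum.distrib sum_distrib_left)
  also have "\<dots> = 2 ^ Suc d * ip (Suc d) u v"
    unfolding Suc sumE_1 by (simp add: ip_def algebra_simps)
  finally show ?case .
qed

lemma ip_sq_nonneg: "0 \<le> ip d u u"
  unfolding ip_def by (rule sum_nonneg) simp

lemma sumE_X4: "(\<Sum>e\<in>E d. (Xf d u e)^4) \<le> 3 * 2 ^ d * (ip d u u)^2"
proof (induction d)
  case 0 then show ?case by (simp add: sumE_0 Xf_def ip_def)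
next
  case (Suc d)
  have "(\<Sum>e\<in>E (Suc d). (Xf (Suc d) u e)^4)
     = (\<Sum>e\<in>E d. 2 * (Xf d u e)^4 + 12 * (u d)^2 * (Xf d u e * Xf d u e) + 2 * (u d)^4)"
    unfolding sumE_Suc Xf_upd by (rule sum.cong) (simp_all add: algebra_simps power4_eq_xxxx power2_eq_square)
  also have "\<dots> = 2 * (\<Sum>e\<in>E d. (Xf d u e)^4) + 12 * (u d)^2 * (\<Sum>e\<in>E d. Xf d u e * Xf d u e)
       + 2 * (u d)^4 * (\<Sum>e\<in>E d. (1::real))"
    by (simp add: sum.distrib sum_distrib_left)
  also have "\<dots> = 2 * (\<Sum>e\<in>E d. (Xf d u e)^4) + 12 * (u d)^2 * (2^d * ip d u u) + 2 * (u d)^4 * 2^d"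
    unfolding sumE_XY sumE_1 ..
  also have "\<dots> \<le> 2 * (3 * 2 ^ d * (ip d u u)^2) + 12 * (u d)^2 * (2^d * ip d u u) + 2 * (u d)^4 * 2^d"
    using Suc by simp
  also have "\<dots> \<le> 3 * 2 ^ Suc d * (ip (Suc d) u u)^2"
  proof -
    have "ip (Suc d) u u = ip d u u + (u d)^2" by (simp add: ip_def power2_eq_square)
    moreover have "(0::real) \<le> 2^d * (u d)^4" by simp
    ultimately show ?thesis by (simp add: algebra_simps power2_eq_square power4_eq_xxxx)
  qed
  finally show ?case .
qed



definition G :: "nat \<Rightarrow> nat \<Rightarrow> (nat \<Rightarrow> nat \<Rightarrow> real) \<Rightarrow> nat \<Rightarrow> (nat \<Rightarrow> nat \<Rightarrow> real) \<Rightarrow> (nat \<Rightarrow> nat \<Rightarrow> real) \<Rightarrow> real" where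
  "G m n a d u v = (\<Sum>i<m. \<Sum>j<n. a i j * ip d (u i) (v j))"

definition Sset :: "nat \<Rightarrow> nat \<Rightarrow> (nat \<Rightarrow> nat \<Rightarrow> real) \<Rightarrow> real set" where
  "Sset m n a = {G m n a d u v | d u v. (\<forall>i<m. ip d (u i) (u i) \<le> 1) \<and> (\<forall>j<n. ip d (v j) (v j) \<le> 1)}"

lemma ip_abs_le:
  assumes "ip d x x \<le> 1" "ip d y y \<le> 1" shows "\<bar>ip d x y\<bar> \<le> 1"
proof -
  have "2 * ip d x y \<le> ip d x x + ip d y y"
    unfolding ip_def sum_distrib_left sum.distrib[symmetric]
  proof (rule sum_mono)
    fix k
    have "0 \<le> (x k - y k) * (x k - y k)" by simp
    then show "2 * (x k * y k) \<le> x k * x k + y k * y k" by (simp add: algebra_simps)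
  qed
  moreover have "- 2 * ip d x y \<le> ip d x x + ip d y y"
    unfolding ip_def sum_distrib_left sum.distrib[symmetric]
  proof (rule sum_mono)
    fix k
    have "0 \<le> (x k + y k) * (x k + y k)" by simp
    then show "- 2 * (x k * y k) \<le> x k * x k + y k * y k" by (simp add: algebra_simps)
  qed
  ultimately show ?thesis using assms by auto
qed

lemma G_le:
  assumes "\<forall>i<m. ip d (u i) (u i) \<le> 1" "\<forall>j<n. ip d (v j) (v j) \<le> 1"
  shows "G m n a d u v \<le> (\<Sum>i<m. \<Sum>j<n. \<bar>a i j\<bar>)"
  unfolding G_def
proof (intro sum_mono)
  fix i j assume "i \<in> {..<m}" "j \<in> {..<n}"
  then have "\<bar>ip d (u i) (v j)\<bar> \<le> 1" using assms ip_abs_le by auto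
  then have "\<bar>a i j\<bar> * \<bar>ip d (u i) (v j)\<bar> \<le> \<bar>a i j\<bar>"
    by (simp add: mult_left_le)
  then show "a i j * ip d (u i) (v j) \<le> \<bar>a i j\<bar>"
    by (metis abs_ge_self abs_mult order_trans)
qed

lemma Sset_bdd: "bdd_above (Sset m n a)"
  unfolding bdd_above_def Sset_def using G_le by blast

lemma Sset_ne: "Sset m n a \<noteq> {}"
proof -
  have "G m n a 0 (\<lambda>_ _. 0) (\<lambda>_ _. 0) \<in> Sset m n a"
    unfolding Sset_def by (force simp: ip_def)
  then show ?thesis by blast
qed

lemma in_Sset_le:
  assumes "\<forall>i<m. ip d (u i) (u i) \<le> 1" "\<forall>j<n. ip d (v j) (v j) \<le> 1"
  shows "G m n a d u v \<le> Sup (Sset m n a)"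
  by (rule cSup_upper[OF _ Sset_bdd]) (use assms in \<open>auto simp: Sset_def\<close>)

lemma transport:
  fixes K :: "'k set" and u v :: "nat \<Rightarrow> 'k \<Rightarrow> real"
  assumes "finite K" "\<forall>i<m. (\<Sum>k\<in>K. u i k * u i k) \<le> 1" "\<forall>j<n. (\<Sum>k\<in>K. v j k * v j k) \<le> 1"
  shows "(\<Sum>i<m. \<Sum>j<n. a i j * (\<Sum>k\<in>K. u i k * v j k)) \<le> Sup (Sset m n a)"
proof -
  obtain f where f: "bij_betw f {0..<card K} K" using ex_bij_betw_nat_finite[OF assms(1)] by blast
  then have f': "bij_betw f {..<card K} K" by (simp add: lessThan_atLeast0)
  define u' where "u' i = (\<lambda>l. u i (f l))" for i
  define v' where "v' j = (\<lambda>l. v j (f l))" for j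
  have ipeq: "ip (card K) (\<lambda>l. p (f l)) (\<lambda>l. q (f l)) = (\<Sum>k\<in>K. p k * q k)" for p q
    unfolding ip_def using sum.reindex_bij_betw[OF f', of "\<lambda>k. p k * q k"] by simp
  have "(\<Sum>i<m. \<Sum>j<n. a i j * (\<Sum>k\<in>K. u i k * v j k)) = G m n a (card K) u' v'"
    unfolding G_def u'_def v'_def by (simp add: ipeq)
  also have "\<dots> \<le> Sup (Sset m n a)"
    by (rule in_Sset_le) (use assms in \<open>simp_all add: ipeq u'_def v'_def\<close>)
  finally show ?thesis .
qed



definition clip :: "real \<Rightarrow> real" where "clip x = max (-8) (min 8 x)"

lemma clip_abs: "\<bar>clip x\<bar> \<le> 8" unfolding clip_def by auto
lemma clip_sq: "clip x * clip x \<le> x * x"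
proof -
  have "\<bar>clip x\<bar> \<le> \<bar>x\<bar>" unfolding clip_def by auto
  then have "\<bar>clip x\<bar> * \<bar>clip x\<bar> \<le> \<bar>x\<bar> * \<bar>x\<bar>" by (intro mult_mono) auto
  then show ?thesis by (metis abs_mult_self_eq)
qed
lemma rem_sq: "64 * ((x - clip x) * (x - clip x)) \<le> x ^ 4"
proof (cases "\<bar>x\<bar> \<le> 8")
  case True then show ?thesis unfolding clip_def by auto
next
  case False
  then have r: "\<bar>x - clip x\<bar> \<le> \<bar>x\<bar>" unfolding clip_def by auto
  have "(x - clip x) * (x - clip x) \<le> x * x"
    using r by (metis abs_mult_self_eq abs_ge_zero mult_mono)
  moreover have "64 \<le> x * x" using False
  proof -
    have "8 * 8 \<le> \<bar>x\<bar> * \<bar>x\<bar>" using False by (intro mult_mono) auto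
    then show ?thesis by (metis abs_mult_self_eq numeral_times_numeral semiring_norm(12) semiring_norm(13) semiring_norm(6) semiring_norm(7) semiring_norm(2))
  qed
  ultimately have "64 * ((x - clip x) * (x - clip x)) \<le> (x * x) * (x * x)"
    by (metis mult_mono zero_le_square)
  then show ?thesis by (simp add: power4_eq_xxxx mult.assoc)
qed

lemma sumE_const: "(\<Sum>e\<in>E d. (c::real)) = c * 2 ^ d"
proof -
  have "(\<Sum>e\<in>E d. c) = c * (\<Sum>e\<in>E d. (1::real))" by (simp only: sum_distrib_left mult_1_right)
  then show ?thesis by (simp only: sumE_1)
qed

lemma sqrt_div_prod: "N > 0 \<Longrightarrow> (p / sqrt N) * (q / sqrt N) = p * q / N"
proof -
  assume "N > 0"
  have "(p / sqrt N) * (q / sqrt N) = p * q / (sqrt N * sqrt N)" by simp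
  also have "sqrt N * sqrt N = N" using \<open>N > 0\<close> by simp
  finally show ?thesis .
qed

lemma norm_T:
  assumes "ip d w w \<le> 1"
  shows "(\<Sum>e\<in>E d. (clip (Xf d w e) / sqrt (2^d)) * (clip (Xf d w e) / sqrt (2^d))) \<le> 1"
proof -
  have N: "(2::real)^d > 0" by simp
  have "(\<Sum>e\<in>E d. (clip (Xf d w e) / sqrt (2^d)) * (clip (Xf d w e) / sqrt (2^d)))
      = (\<Sum>e\<in>E d. clip (Xf d w e) * clip (Xf d w e)) / 2^d"
    by (simp add: sqrt_div_prod[OF N] sum_divide_distrib)
  also have "\<dots> \<le> (\<Sum>e\<in>E d. Xf d w e * Xf d w e) / 2^d"
    by (intro divide_right_mono sum_mono clip_sq) simp
  also have "\<dots> = ip d w w" by (simp add: sumE_XY)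
  finally show ?thesis using assms by simp
qed

lemma norm_X:
  assumes "ip d w w \<le> 1"
  shows "(\<Sum>e\<in>E d. (Xf d w e / sqrt (2^d)) * (Xf d w e / sqrt (2^d))) \<le> 1"
proof -
  have N: "(2::real)^d > 0" by simp
  have "(\<Sum>e\<in>E d. (Xf d w e / sqrt (2^d)) * (Xf d w e / sqrt (2^d)))
      = (\<Sum>e\<in>E d. Xf d w e * Xf d w e) / 2^d"
    by (simp add: sqrt_div_prod[OF N] sum_divide_distrib)
  also have "\<dots> = ip d w w" by (simp add: sumE_XY)
  finally show ?thesis using assms by simp
qed

lemma norm_R:
  assumes "ip d w w \<le> 1"
  shows "(\<Sum>e\<in>E d. (4 * (Xf d w e - clip (Xf d w e)) / sqrt (2^d)) * (4 * (Xf d w e - clip (Xf d w e)) / sqrt (2^d))) \<le> 1"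
proof -
  have N: "(2::real)^d > 0" by simp
  have "(\<Sum>e\<in>E d. (4 * (Xf d w e - clip (Xf d w e)) / sqrt (2^d)) * (4 * (Xf d w e - clip (Xf d w e)) / sqrt (2^d)))
      = (\<Sum>e\<in>E d. 64 * ((Xf d w e - clip (Xf d w e)) * (Xf d w e - clip (Xf d w e)))) / (4 * 2^d)"
    unfolding sum_divide_distrib by (rule sum.cong[OF refl]) (simp add: sqrt_div_prod[OF N] field_simps)
  also have "\<dots> \<le> (\<Sum>e\<in>E d. (Xf d w e)^4) / (4 * 2^d)"
    by (intro divide_right_mono sum_mono rem_sq) simp
  also have "\<dots> \<le> (3 * 2 ^ d * (ip d w w)^2) / (4 * 2^d)"
    by (intro divide_right_mono sumE_X4) simp
  also have "\<dots> = 3 * (ip d w w)^2 / 4" by simp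
  also have "\<dots> \<le> 1"
  proof -
    have "(ip d w w)^2 \<le> 1" using assms ip_sq_nonneg[of d w] by (simp add: abs_le_square_iff power_le_one)
    then show ?thesis by simp
  qed
  finally show ?thesis .
qed



lemma groth_step:
  assumes box: "\<And>x y. (\<forall>i<m. \<bar>x i\<bar> \<le> 1) \<Longrightarrow> (\<forall>j<n. \<bar>y j\<bar> \<le> 1) \<Longrightarrow>
                   (\<Sum>i<m. \<Sum>j<n. a i j * x i * y j) \<le> B"
    and nu: "\<forall>i<m. ip d (u i) (u i) \<le> 1" and nv: "\<forall>j<n. ip d (v j) (v j) \<le> 1"
  shows "G m n a d u v \<le> 64 * B + Sup (Sset m n a) / 2"
proof -
  define S where "S = Sup (Sset m n a)"
  define N :: real where "N = 2 ^ d"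
  have Npos: "N > 0" unfolding N_def by simp
  define X where "X i e = Xf d (u i) e" for i e
  define Y where "Y j e = Xf d (v j) e" for j e
  define T where "T i e = clip (X i e)" for i e
  define R where "R i e = X i e - T i e" for i e
  define T' where "T' j e = clip (Y j e)" for j e
  define R' where "R' j e = Y j e - T' j e" for j e
  have ipX: "ip d (u i) (v j) = (\<Sum>e\<in>E d. X i e * Y j e) / N" for i j
    using sumE_XY[of d "u i" "v j"] Npos unfolding X_def Y_def N_def by simp
  have split: "X i e * Y j e = T i e * T' j e + T i e * R' j e + R i e * Y j e" for i j e
    unfolding R_def R'_def by (simp add: algebra_simps)
  define P1 where "P1 = (\<Sum>e\<in>E d. \<Sum>i<m. \<Sum>j<n. a i j * T i e * T' j e) / N"
  define P2 where "P2 = (\<Sum>i<m. \<Sum>j<n. a i j * (\<Sum>e\<in>E d. T i e * R' j e)) / N"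
  define P3 where "P3 = (\<Sum>i<m. \<Sum>j<n. a i j * (\<Sum>e\<in>E d. R i e * Y j e)) / N"
  have "G m n a d u v = (\<Sum>i<m. \<Sum>j<n. a i j * (\<Sum>e\<in>E d. X i e * Y j e)) / N"
    unfolding G_def ipX by (simp only: times_divide_eq_right sum_divide_distrib sum_distrib_left)
  also have "\<dots> = (\<Sum>i<m. \<Sum>j<n. a i j * (\<Sum>e\<in>E d. T i e * T' j e)
                 + a i j * (\<Sum>e\<in>E d. T i e * R' j e) + a i j * (\<Sum>e\<in>E d. R i e * Y j e)) / N"
    unfolding split sum.distrib distrib_left ..
  also have "\<dots> = P1 + P2 + P3"
  proof -
    have "(\<Sum>e\<in>E d. \<Sum>i<m. \<Sum>j<n. a i j * T i e * T' j e) = (\<Sum>i<m. \<Sum>j<n. \<Sum>e\<in>E d. a i j * T i e * T' j e)"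
      by (subst sum.swap) (rule sum.cong[OF refl], rule sum.swap)
    also have "\<dots> = (\<Sum>i<m. \<Sum>j<n. a i j * (\<Sum>e\<in>E d. T i e * T' j e))"
      by (simp add: sum_distrib_left mult.assoc)
    finally show ?thesis unfolding P1_def P2_def P3_def by (simp add: sum.distrib add_divide_distrib)
  qed
  finally have Geq: "G m n a d u v = P1 + P2 + P3" .
  have "P1 \<le> 64 * B"
  proof -
    have "(\<Sum>i<m. \<Sum>j<n. a i j * T i e * T' j e) \<le> 64 * B" for e
    proof -
      have "(\<Sum>i<m. \<Sum>j<n. a i j * (T i e / 8) * (T' j e / 8)) \<le> B"
        by (rule box) (auto simp: T_def T'_def clip_abs)
      moreover have "(\<Sum>i<m. \<Sum>j<n. a i j * T i e * T' j e) = 64 * (\<Sum>i<m. \<Sum>j<n. a i j * (T i e / 8) * (T' j e / 8))"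
        by (simp add: sum_distrib_left)
      ultimately show ?thesis by simp
    qed
    then have "(\<Sum>e\<in>E d. \<Sum>i<m. \<Sum>j<n. a i j * T i e * T' j e) \<le> (\<Sum>e\<in>E d. 64 * B)"
      by (intro sum_mono) auto
    also have "\<dots> = 64 * B * N" unfolding sumE_const N_def ..
    finally show ?thesis unfolding P1_def using Npos by (simp add: divide_le_eq)
  qed
  moreover have "4 * P2 \<le> S"
  proof -
    have "(\<Sum>i<m. \<Sum>j<n. a i j * (\<Sum>e\<in>E d. (T i e / sqrt N) * (4 * R' j e / sqrt N))) \<le> S"
      unfolding S_def
    proof (rule transport[OF finite_E])
      show "\<forall>i<m. (\<Sum>e\<in>E d. (T i e / sqrt N) * (T i e / sqrt N)) \<le> 1"
        using nu norm_T unfolding T_def X_def N_def by blast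
      show "\<forall>j<n. (\<Sum>e\<in>E d. (4 * R' j e / sqrt N) * (4 * R' j e / sqrt N)) \<le> 1"
        using nv norm_R unfolding R'_def T'_def Y_def N_def by blast
    qed
    moreover have "(\<Sum>e\<in>E d. (T i e / sqrt N) * (4 * R' j e / sqrt N)) = 4 * (\<Sum>e\<in>E d. T i e * R' j e) / N" for i j
      unfolding sqrt_div_prod[OF Npos] sum_distrib_left sum_divide_distrib by (simp add: algebra_simps)
    ultimately have "(\<Sum>i<m. \<Sum>j<n. a i j * (4 * (\<Sum>e\<in>E d. T i e * R' j e) / N)) \<le> S" by (simp only:)
    moreover have "4 * P2 = (\<Sum>i<m. \<Sum>j<n. a i j * (4 * (\<Sum>e\<in>E d. T i e * R' j e) / N))"
      unfolding P2_def by (simp only: times_divide_eq_right sum_distrib_left sum_divide_distrib) (simp add: ac_simps)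
    ultimately show ?thesis by simp
  qed
  moreover have "4 * P3 \<le> S"
  proof -
    have "(\<Sum>i<m. \<Sum>j<n. a i j * (\<Sum>e\<in>E d. (4 * R i e / sqrt N) * (Y j e / sqrt N))) \<le> S"
      unfolding S_def
    proof (rule transport[OF finite_E])
      show "\<forall>j<n. (\<Sum>e\<in>E d. (Y j e / sqrt N) * (Y j e / sqrt N)) \<le> 1"
        using nv norm_X unfolding Y_def N_def by blast
      show "\<forall>i<m. (\<Sum>e\<in>E d. (4 * R i e / sqrt N) * (4 * R i e / sqrt N)) \<le> 1"
        using nu norm_R unfolding R_def T_def X_def N_def by blast
    qed
    moreover have "(\<Sum>e\<in>E d. (4 * R i e / sqrt N) * (Y j e / sqrt N)) = 4 * (\<Sum>e\<in>E d. R i e * Y j e) / N" for i j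
      unfolding sqrt_div_prod[OF Npos] sum_distrib_left sum_divide_distrib by (simp add: algebra_simps)
    ultimately have "(\<Sum>i<m. \<Sum>j<n. a i j * (4 * (\<Sum>e\<in>E d. R i e * Y j e) / N)) \<le> S" by (simp only:)
    moreover have "4 * P3 = (\<Sum>i<m. \<Sum>j<n. a i j * (4 * (\<Sum>e\<in>E d. R i e * Y j e) / N))"
      unfolding P3_def by (simp only: times_divide_eq_right sum_distrib_left sum_divide_distrib) (simp add: ac_simps)
    ultimately show ?thesis by simp
  qed
  ultimately show ?thesis unfolding Geq using S_def by linarith
qed

lemma groth:
  assumes box: "\<And>x y. (\<forall>i<m. \<bar>x i\<bar> \<le> 1) \<Longrightarrow> (\<forall>j<n. \<bar>y j\<bar> \<le> 1) \<Longrightarrow>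
                   (\<Sum>i<m. \<Sum>j<n. a i j * x i * y j) \<le> B"
  shows "Sup (Sset m n a) \<le> 128 * B"
proof -
  have "Sup (Sset m n a) \<le> 64 * B + Sup (Sset m n a) / 2"
  proof (rule cSup_least[OF Sset_ne])
    fix x assume "x \<in> Sset m n a"
    then obtain d u v where "x = G m n a d u v" "\<forall>i<m. ip d (u i) (u i) \<le> 1" "\<forall>j<n. ip d (v j) (v j) \<le> 1"
      unfolding Sset_def by blast
    then show "x \<le> 64 * B + Sup (Sset m n a) / 2" using groth_step[OF box] by blast
  qed
  then show ?thesis by simp
qed



lemma pos_box:
  fixes a :: "nat \<Rightarrow> nat \<Rightarrow> real"
  assumes "\<forall>i<m. 0 \<le> x i \<and> x i \<le> 1" "\<forall>j<n. 0 \<le> y j \<and> y j \<le> 1"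
  shows "\<exists>X Y. X \<subseteq> {..<m} \<and> Y \<subseteq> {..<n} \<and> (\<Sum>i<m. \<Sum>j<n. a i j * x i * y j) \<le> (\<Sum>i\<in>X. \<Sum>j\<in>Y. a i j)"
proof -
  define c where "c i = (\<Sum>j<n. a i j * y j)" for i
  define X where "X = {i\<in>{..<m}. c i > 0}"
  have "(\<Sum>i<m. \<Sum>j<n. a i j * x i * y j) = (\<Sum>i<m. x i * c i)"
    unfolding c_def by (simp add: sum_distrib_left algebra_simps)
  also have "\<dots> \<le> (\<Sum>i<m. if c i > 0 then c i else 0)"
  proof (rule sum_mono)
    fix i assume "i \<in> {..<m}"
    then have "0 \<le> x i" "x i \<le> 1" using assms by auto
    then show "x i * c i \<le> (if c i > 0 then c i else 0)"
      by (cases "c i > 0") (auto simp: mult_le_cancel_right1 mult_nonneg_nonpos)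
  qed
  also have "\<dots> = (\<Sum>i\<in>X. c i)"
    unfolding X_def by (simp add: sum.inter_filter[symmetric])
  also have "\<dots> = (\<Sum>j<n. y j * (\<Sum>i\<in>X. a i j))"
    unfolding c_def by (simp add: sum.swap[of _ X] sum_distrib_left algebra_simps)
  finally have h1: "(\<Sum>i<m. \<Sum>j<n. a i j * x i * y j) \<le> (\<Sum>j<n. y j * (\<Sum>i\<in>X. a i j))" .
  define dd where "dd j = (\<Sum>i\<in>X. a i j)" for j
  define Y where "Y = {j\<in>{..<n}. dd j > 0}"
  have "(\<Sum>j<n. y j * (\<Sum>i\<in>X. a i j)) \<le> (\<Sum>j<n. if dd j > 0 then dd j else 0)"
    unfolding dd_def[symmetric]
  proof (rule sum_mono)
    fix j assume "j \<in> {..<n}"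
    then have "0 \<le> y j" "y j \<le> 1" using assms by auto
    then show "y j * dd j \<le> (if dd j > 0 then dd j else 0)"
      by (cases "dd j > 0") (auto simp: mult_le_cancel_right1 mult_nonneg_nonpos)
  qed
  also have "\<dots> = (\<Sum>j\<in>Y. dd j)"
    unfolding Y_def by (simp add: sum.inter_filter[symmetric])
  also have "\<dots> = (\<Sum>i\<in>X. \<Sum>j\<in>Y. a i j)"
    unfolding dd_def by (rule sum.swap)
  finally show ?thesis using h1 unfolding X_def Y_def by (intro exI[of _ X] exI[of _ Y]) (auto simp: X_def Y_def)
qed



definition FF :: "(nat \<Rightarrow> nat \<Rightarrow> real) \<Rightarrow> nat set \<Rightarrow> nat set \<Rightarrow> real" where
  "FF A X Y = (\<Sum>i\<in>X. \<Sum>j\<in>Y. A i j)"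

definition AM :: "nat \<Rightarrow> nat \<Rightarrow> (nat \<Rightarrow> nat \<Rightarrow> real) \<Rightarrow> nat \<Rightarrow> nat \<Rightarrow> real" where
  "AM m n M i j = M i j - density m n M"

lemma disc_FF:
  assumes "X \<subseteq> {..<m}" "Y \<subseteq> {..<n}"
  shows "disc m n M X Y = FF (AM m n M) X Y"
proof -
  have fin: "finite X" "finite Y" using assms finite_subset by auto
  show ?thesis unfolding disc_def FF_def AM_def ones_def
    by (simp add: sum_subtractf fin)
qed

lemma total_zero: "FF (AM m n M) {..<m} {..<n} = 0"
proof -
  have "FF (AM m n M) {..<m} {..<n} = ones m n M {..<m} {..<n} - density m n M * real m * real n"
    using disc_FF[of "{..<m}" m "{..<n}" n M] unfolding disc_def by simp
  moreover have "ones m n M {..<m} {..<n} = density m n M * real m * real n"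
  proof (cases "m = 0 \<or> n = 0")
    case True then show ?thesis unfolding ones_def by auto
  next
    case False then show ?thesis unfolding density_def by simp
  qed
  ultimately show ?thesis by simp
qed

lemma FF_split1: "X \<subseteq> U \<Longrightarrow> finite U \<Longrightarrow> FF A U Y = FF A X Y + FF A (U - X) Y"
  unfolding FF_def by (simp add: sum.subset_diff[of X U])

lemma FF_split2: "Y \<subseteq> V \<Longrightarrow> finite V \<Longrightarrow> FF A X V = FF A X Y + FF A X (V - Y)"
  unfolding FF_def by (simp add: sum.subset_diff[of Y V] sum.distrib)

definition DS :: "nat \<Rightarrow> nat \<Rightarrow> (nat \<Rightarrow> nat \<Rightarrow> real) \<Rightarrow> real set" where
  "DS m n M = {disc m n M X Y | X Y. X \<subseteq> {..<m} \<and> Y \<subseteq> {..<n}}"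

lemma DS_img: "DS m n M = (\<lambda>(X, Y). disc m n M X Y) ` (Pow {..<m} \<times> Pow {..<n})"
  unfolding DS_def by auto

lemma DS_fin: "finite (DS m n M)" unfolding DS_img by simp
lemma DS_ne: "DS m n M \<noteq> {}" unfolding DS_def by blast

lemma DSm_img: "{- disc m n M X Y | X Y. X \<subseteq> {..<m} \<and> Y \<subseteq> {..<n}} = uminus ` DS m n M"
  unfolding DS_def by auto

lemma dp_DS: "disc_plus m n M = Max (DS m n M)" unfolding disc_plus_def DS_def ..
lemma dm_DS: "disc_minus m n M = Max (uminus ` DS m n M)" unfolding disc_minus_def DSm_img ..

lemma dp_ge: assumes "X \<subseteq> {..<m}" "Y \<subseteq> {..<n}" shows "FF (AM m n M) X Y \<le> disc_plus m n M"
proof -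
  have "disc m n M X Y \<in> DS m n M" unfolding DS_def using assms by blast
  then have "disc m n M X Y \<le> Max (DS m n M)" by (rule Max_ge[OF DS_fin])
  then show ?thesis using disc_FF[OF assms] dp_DS by simp
qed

lemma dm_ge: assumes "X \<subseteq> {..<m}" "Y \<subseteq> {..<n}" shows "- FF (AM m n M) X Y \<le> disc_minus m n M"
proof -
  have "disc m n M X Y \<in> DS m n M" unfolding DS_def using assms by blast
  then have "- disc m n M X Y \<in> uminus ` DS m n M" by blast
  then have "- disc m n M X Y \<le> Max (uminus ` DS m n M)" by (rule Max_ge[OF finite_imageI[OF DS_fin]])
  then show ?thesis using disc_FF[OF assms] dm_DS by simp
qed

lemma dp_ex: "\<exists>X Y. X \<subseteq> {..<m} \<and> Y \<subseteq> {..<n} \<and> disc_plus m n M = FF (AM m n M) X Y"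
proof -
  have "disc_plus m n M \<in> DS m n M"
    unfolding dp_DS by (rule Max_in[OF DS_fin DS_ne])
  then obtain X Y where "X \<subseteq> {..<m}" "Y \<subseteq> {..<n}" "disc_plus m n M = disc m n M X Y"
    unfolding DS_def by blast
  then show ?thesis using disc_FF by metis
qed

lemma dm_ex: "\<exists>X Y. X \<subseteq> {..<m} \<and> Y \<subseteq> {..<n} \<and> disc_minus m n M = - FF (AM m n M) X Y"
proof -
  have "disc_minus m n M \<in> uminus ` DS m n M"
    unfolding dm_DS by (rule Max_in) (auto simp: DS_fin DS_ne)
  then obtain X Y where "X \<subseteq> {..<m}" "Y \<subseteq> {..<n}" "disc_minus m n M = - disc m n M X Y"
    unfolding DS_def by blast
  then show ?thesis using disc_FF by metis
qed

lemma four: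
  assumes "X \<subseteq> {..<m}" "Y \<subseteq> {..<n}"
  shows "FF A X Y + FF A ({..<m} - X) Y + FF A X ({..<n} - Y) + FF A ({..<m} - X) ({..<n} - Y)
         = FF A {..<m} {..<n}"
  using FF_split1[OF assms(1) finite_lessThan, of A "{..<n}"] FF_split2[OF assms(2) finite_lessThan, of A X]
    FF_split2[OF assms(2) finite_lessThan, of A "{..<m} - X"] by linarith

lemma dm_le: "disc_minus m n M \<le> 3 * disc_plus m n M"
proof -
  obtain X Y where XY: "X \<subseteq> {..<m}" "Y \<subseteq> {..<n}" "disc_minus m n M = - FF (AM m n M) X Y"
    using dm_ex[of m n M] by metis
  have "FF (AM m n M) ({..<m} - X) Y \<le> disc_plus m n M"
       "FF (AM m n M) X ({..<n} - Y) \<le> disc_plus m n M"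
       "FF (AM m n M) ({..<m} - X) ({..<n} - Y) \<le> disc_plus m n M"
    using dp_ge[OF Diff_subset XY(2)] dp_ge[OF XY(1) Diff_subset] dp_ge[OF Diff_subset Diff_subset] by auto
  then show ?thesis using four[OF XY(1,2), of "AM m n M"] total_zero[of m n M] XY(3) by linarith
qed

lemma dp_le: "disc_plus m n M \<le> 3 * disc_minus m n M"
proof -
  obtain X Y where XY: "X \<subseteq> {..<m}" "Y \<subseteq> {..<n}" "disc_plus m n M = FF (AM m n M) X Y"
    using dp_ex[of m n M] by metis
  have "- FF (AM m n M) ({..<m} - X) Y \<le> disc_minus m n M"
       "- FF (AM m n M) X ({..<n} - Y) \<le> disc_minus m n M"
       "- FF (AM m n M) ({..<m} - X) ({..<n} - Y) \<le> disc_minus m n M"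
    using dm_ge[OF Diff_subset XY(2)] dm_ge[OF XY(1) Diff_subset] dm_ge[OF Diff_subset Diff_subset] by auto
  then show ?thesis using four[OF XY(1,2), of "AM m n M"] total_zero[of m n M] XY(3) by linarith
qed



lemma box_pp:
  assumes "\<forall>i<m. 0 \<le> x i \<and> x i \<le> 1" "\<forall>j<n. 0 \<le> y j \<and> y j \<le> 1"
  shows "(\<Sum>i<m. \<Sum>j<n. AM m n M i j * x i * y j) \<le> disc_plus m n M"
proof -
  from pos_box[OF assms, of "AM m n M"] obtain X where "\<exists>Y. X \<subseteq> {..<m} \<and> Y \<subseteq> {..<n} \<and>
      (\<Sum>i<m. \<Sum>j<n. AM m n M i j * x i * y j) \<le> (\<Sum>i\<in>X. \<Sum>j\<in>Y. AM m n M i j)" ..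
  then obtain Y where H: "X \<subseteq> {..<m} \<and> Y \<subseteq> {..<n} \<and>
      (\<Sum>i<m. \<Sum>j<n. AM m n M i j * x i * y j) \<le> (\<Sum>i\<in>X. \<Sum>j\<in>Y. AM m n M i j)" ..
  note HH = conjunct1[OF H] conjunct1[OF conjunct2[OF H]] conjunct2[OF conjunct2[OF H]]
  have "FF (AM m n M) X Y \<le> disc_plus m n M" by (rule dp_ge[OF HH(1,2)])
  then show ?thesis using HH(3) unfolding FF_def by linarith
qed

lemma box_mm:
  assumes "\<forall>i<m. 0 \<le> x i \<and> x i \<le> 1" "\<forall>j<n. 0 \<le> y j \<and> y j \<le> 1"
  shows "(\<Sum>i<m. \<Sum>j<n. (- AM m n M i j) * x i * y j) \<le> disc_minus m n M"
proof -
  from pos_box[OF assms, of "\<lambda>i j. - AM m n M i j"] obtain X where "\<exists>Y. X \<subseteq> {..<m} \<and> Y \<subseteq> {..<n} \<and>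
      (\<Sum>i<m. \<Sum>j<n. (- AM m n M i j) * x i * y j) \<le> (\<Sum>i\<in>X. \<Sum>j\<in>Y. - AM m n M i j)" ..
  then obtain Y where H: "X \<subseteq> {..<m} \<and> Y \<subseteq> {..<n} \<and>
      (\<Sum>i<m. \<Sum>j<n. (- AM m n M i j) * x i * y j) \<le> (\<Sum>i\<in>X. \<Sum>j\<in>Y. - AM m n M i j)" ..
  note HH = conjunct1[OF H] conjunct1[OF conjunct2[OF H]] conjunct2[OF conjunct2[OF H]]
  have "- FF (AM m n M) X Y \<le> disc_minus m n M" by (rule dm_ge[OF HH(1,2)])
  moreover have "(\<Sum>i\<in>X. \<Sum>j\<in>Y. - AM m n M i j) = - FF (AM m n M) X Y"
    unfolding FF_def by (simp add: sum_negf)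
  ultimately show ?thesis using HH(3) by linarith
qed

lemma box_all:
  assumes "\<forall>i<m. \<bar>x i\<bar> \<le> 1" "\<forall>j<n. \<bar>y j\<bar> \<le> 1"
  shows "(\<Sum>i<m. \<Sum>j<n. AM m n M i j * x i * y j) \<le> 2 * disc_plus m n M + 2 * disc_minus m n M"
proof -
  define xp where "xp i = max (x i) 0" for i
  define xm where "xm i = max (- x i) 0" for i
  define yp where "yp j = max (y j) 0" for j
  define ym where "ym j = max (- y j) 0" for j
  have bx: "\<forall>i<m. 0 \<le> xp i \<and> xp i \<le> 1" "\<forall>i<m. 0 \<le> xm i \<and> xm i \<le> 1"
    using assms(1) unfolding xp_def xm_def by auto
  have bxy: "\<forall>j<n. 0 \<le> yp j \<and> yp j \<le> 1" "\<forall>j<n. 0 \<le> ym j \<and> ym j \<le> 1"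
    using assms(2) unfolding yp_def ym_def by auto
  have xe: "x i = xp i - xm i" for i unfolding xp_def xm_def by auto
  have ye: "y j = yp j - ym j" for j unfolding yp_def ym_def by auto
  let ?A = "AM m n M"
  have "(\<Sum>i<m. \<Sum>j<n. ?A i j * x i * y j) =
     (\<Sum>i<m. \<Sum>j<n. ?A i j * xp i * yp j) + (\<Sum>i<m. \<Sum>j<n. (- ?A i j) * xp i * ym j)
     + (\<Sum>i<m. \<Sum>j<n. (- ?A i j) * xm i * yp j) + (\<Sum>i<m. \<Sum>j<n. ?A i j * xm i * ym j)"
    unfolding sum.distrib[symmetric] by (rule sum.cong[OF refl], rule sum.cong[OF refl]) (simp add: xe ye algebra_simps)
  also have "\<dots> \<le> disc_plus m n M + disc_minus m n M + disc_minus m n M + disc_plus m n M"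
    using box_pp[OF bx(1) bxy(1), of M] box_mm[OF bx(1) bxy(2), of M] box_mm[OF bx(2) bxy(1), of M]
      box_pp[OF bx(2) bxy(2), of M] by linarith
  finally show ?thesis by simp
qed

definition PS :: "nat \<Rightarrow> nat \<Rightarrow> (nat \<Rightarrow> nat \<Rightarrow> real) \<Rightarrow> real set" where
  "PS m n M = {(\<Sum>i<m. \<Sum>j<n. M i j * ip (m+n) (v i) (w j))
                       - density m n M * (\<Sum>i<m. \<Sum>j<n. ip (m+n) (v i) (w j)) | v w.
          (\<forall>i<m. sqrt (ip (m+n) (v i) (v i)) \<le> 1) \<and> (\<forall>j<n. sqrt (ip (m+n) (w j) (w j)) \<le> 1)}"

lemma pdisc0_PS: "pdisc0 m n M = Sup (PS m n M)"
  unfolding pdisc0_def PS_def ..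

lemma pd_elem: "(\<Sum>i<m. \<Sum>j<n. M i j * ip d (v i) (w j)) - density m n M * (\<Sum>i<m. \<Sum>j<n. ip d (v i) (w j))
   = G m n (AM m n M) d v w"
  unfolding G_def AM_def by (simp add: left_diff_distrib sum_subtractf sum_distrib_left)

lemma PS_mem:
  assumes "\<forall>i<m. ip (m+n) (v i) (v i) \<le> 1" "\<forall>j<n. ip (m+n) (w j) (w j) \<le> 1"
  shows "G m n (AM m n M) (m+n) v w \<in> PS m n M"
proof -
  have "(\<Sum>i<m. \<Sum>j<n. M i j * ip (m+n) (v i) (w j)) - density m n M * (\<Sum>i<m. \<Sum>j<n. ip (m+n) (v i) (w j)) \<in> PS m n M"
    unfolding PS_def using assms by auto
  then show ?thesis unfolding pd_elem .
qed

lemma PS_le: "x \<in> PS m n M \<Longrightarrow> x \<le> Sup (Sset m n (AM m n M))"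
proof -
  assume "x \<in> PS m n M"
  then obtain v w where "x = (\<Sum>i<m. \<Sum>j<n. M i j * ip (m+n) (v i) (w j)) - density m n M * (\<Sum>i<m. \<Sum>j<n. ip (m+n) (v i) (w j))"
    "\<forall>i<m. sqrt (ip (m+n) (v i) (v i)) \<le> 1" "\<forall>j<n. sqrt (ip (m+n) (w j) (w j)) \<le> 1"
    unfolding PS_def by blast
  then show ?thesis unfolding pd_elem by (simp add: in_Sset_le)
qed

lemma PS_ne: "PS m n M \<noteq> {}"
  using PS_mem[of m n "\<lambda>_ _. 0" "\<lambda>_ _. 0" M] by (auto simp: ip_def)

lemma PS_bdd: "bdd_above (PS m n M)"
  unfolding bdd_above_def using PS_le by blast

lemma pd_upper: "pdisc0 m n M \<le> Sup (Sset m n (AM m n M))"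
  unfolding pdisc0_PS by (rule cSup_least[OF PS_ne]) (rule PS_le)

lemma pd_lower:
  assumes "X \<subseteq> {..<m}" "Y \<subseteq> {..<n}" "s = 1 \<or> s = (-1::real)"
  shows "s * FF (AM m n M) X Y \<le> pdisc0 m n M"
proof (cases "m + n = 0")
  case True
  then have "X = {}" using assms by auto
  then have "s * FF (AM m n M) X Y = G m n (AM m n M) (m+n) (\<lambda>_ _. 0) (\<lambda>_ _. 0)"
    using True by (simp add: FF_def G_def)
  also have "\<dots> \<le> pdisc0 m n M" unfolding pdisc0_PS
    by (rule cSup_upper[OF PS_mem PS_bdd]) (auto simp: ip_def)
  finally show ?thesis .
next
  case False
  define e0 :: "nat \<Rightarrow> real" where "e0 k = (if k = 0 then 1 else 0)" for k
  define v where "v i = (if i \<in> X then e0 else (\<lambda>_. 0))" for i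
  define w where "w j = (if j \<in> Y then (\<lambda>k. s * e0 k) else (\<lambda>_. 0))" for j
  have ip00: "ip (m+n) e0 e0 = 1" "ip (m+n) e0 (\<lambda>k. s * e0 k) = s" "ip (m+n) (\<lambda>k. s * e0 k) (\<lambda>k. s * e0 k) = 1"
    using False assms(3) unfolding ip_def e0_def by (auto simp: if_distrib cong: if_cong)
  have nv: "\<forall>i<m. ip (m+n) (v i) (v i) \<le> 1" unfolding v_def using ip00 by (auto simp: ip_def)
  have nw: "\<forall>j<n. ip (m+n) (w j) (w j) \<le> 1" unfolding w_def using ip00 by (auto simp: ip_def)
  have ipvw: "ip (m+n) (v i) (w j) = (if i \<in> X \<and> j \<in> Y then s else 0)" for i j
    unfolding v_def w_def using ip00 by (auto simp: ip_def)
  have finX: "finite X" "finite Y" using assms finite_subset by auto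
  have "G m n (AM m n M) (m+n) v w = (\<Sum>i<m. \<Sum>j<n. if i \<in> X \<and> j \<in> Y then s * AM m n M i j else 0)"
    unfolding G_def ipvw by (intro sum.cong refl) auto
  also have "\<dots> = (\<Sum>i<m. if i \<in> X then (\<Sum>j<n. if j \<in> Y then s * AM m n M i j else 0) else 0)"
    by (intro sum.cong refl) auto
  also have "\<dots> = (\<Sum>i\<in>X. \<Sum>j\<in>Y. s * AM m n M i j)"
    by (simp only: sum.inter_restrict[OF finite_lessThan, symmetric] Int_absorb1[OF assms(1)] Int_absorb1[OF assms(2)])
  also have "\<dots> = s * FF (AM m n M) X Y" unfolding FF_def by (simp add: sum_distrib_left)
  finally have "s * FF (AM m n M) X Y = G m n (AM m n M) (m+n) v w" by simp
  also have "\<dots> \<le> pdisc0 m n M" unfolding pdisc0_PS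
    by (rule cSup_upper[OF PS_mem[OF nv nw] PS_bdd])
  finally show ?thesis .
qed

lemma main_bounds:
  "1 * disc_plus m n M \<le> pdisc0 m n M \<and> pdisc0 m n M \<le> 1024 * disc_plus m n M \<and>
   1 * disc_minus m n M \<le> pdisc0 m n M \<and> pdisc0 m n M \<le> 1024 * disc_minus m n M"
proof -
  obtain X Y where XY: "X \<subseteq> {..<m}" "Y \<subseteq> {..<n}" "disc_plus m n M = FF (AM m n M) X Y"
    using dp_ex[of m n M] by metis
  obtain X' Y' where XY': "X' \<subseteq> {..<m}" "Y' \<subseteq> {..<n}" "disc_minus m n M = - FF (AM m n M) X' Y'"
    using dm_ex[of m n M] by metis
  have l1: "disc_plus m n M \<le> pdisc0 m n M"
    using pd_lower[OF XY(1,2), of 1 M] XY(3) by simp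
  have l2: "disc_minus m n M \<le> pdisc0 m n M"
    using pd_lower[OF XY'(1,2), of "-1" M] XY'(3) by simp
  have u: "pdisc0 m n M \<le> 128 * (2 * disc_plus m n M + 2 * disc_minus m n M)"
    using pd_upper[of m n M] groth[of m n "AM m n M", OF box_all] by (meson order_trans)
  have u2: "128 * (2 * disc_plus m n M + 2 * disc_minus m n M) = 256 * disc_plus m n M + 256 * disc_minus m n M" by simp
  have d1: "disc_minus m n M \<le> 3 * disc_plus m n M" by (rule dm_le)
  have d2: "disc_plus m n M \<le> 3 * disc_minus m n M" by (rule dp_le)
  have s1: "1 * disc_plus m n M \<le> pdisc0 m n M" using l1 by linarith
  have s2: "pdisc0 m n M \<le> 1024 * disc_plus m n M" using u u2 d1 by linarith
  have s3: "1 * disc_minus m n M \<le> pdisc0 m n M" using l2 by linarith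
  have s4: "pdisc0 m n M \<le> 1024 * disc_minus m n M" using u u2 d2 by linarith
  show ?thesis using s1 s2 s3 s4 by blast
qed

theorem claim2p5:
  "\<exists>c1 c2 :: real. c1 > 0 \<and> c2 > 0 \<and>
     (\<forall>(m::nat) (n::nat) (M :: nat \<Rightarrow> nat \<Rightarrow> real).
        (\<forall>i<m. \<forall>j<n. M i j \<in> {0, 1}) \<longrightarrow>
          c1 * disc_plus m n M \<le> pdisc0 m n M \<and> pdisc0 m n M \<le> c2 * disc_plus m n M \<and>
          c1 * disc_minus m n M \<le> pdisc0 m n M \<and> pdisc0 m n M \<le> c2 * disc_minus m n M)"
  apply (rule exI[of _ 1], rule exI[of _ 1024])
  using main_bounds by simp

end
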